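(* Let $Z$ and $V$ be real Banach spaces, let $D \subset Z$ be open, let $F: D \to V$, and let $r \in D$ satisfy $F(r) = 0$. Suppose $F$ is semismooth at $r$ with Newton derivative $H: D \to L(Z,V)$ on an open neighbourhood $N \subset D$ of $r$ (in the sense defined in the context). Further assume that $H(z)$ is invertible for every $z \in N$ and that $\{\|H(z)^{-1}\| : z \in N\}$ has a finite upper bound $\Gamma$. Let $p \ge 1$. Then each of the operators $$M(z;r) = \frac{\mathcal{I}_V}{\|z-r\|_Z^p} \qquad\text{and}\qquad M(z;r) = \left(\frac{1}{\|z-r\|_Z^p} + 1\right)\mathcal{I}_V, \qquad z \in Z\setminus\{r\},$$ where $\mathcal{I}_V$ is the identity map on $V$, is a deflation operator for $F$ at $r$; that is, $M(z;r) \in L(V,V)$ is invertible for all $z \neq r$ in a neighbourhood of $r$, and $$\liminf_{z \to r} \|M(z;r)F(z)\|_V > 0.$$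
   Context: Semismoothness: $F: D \subset Z \to V$ ($D$ open) is semismooth at $z \in D$ if it is locally Lipschitz continuous at $z$ and there exist an open neighbourhood $N \subset D$ containing $z$ and a mapping $H: D \to L(Z,V)$ (a Newton derivative) such that $F(w+h) - F(w) - H(w+h)h = o(\|h\|_Z)$ as $h \to 0$, for all $w \in N$. A deflation operator for $F$ at a root $r$ is a map $M(\cdot;r): Z\setminus\{r\} \to L(V,V)$ such that $M(z;r)$ is invertible for all $z \ne r$ in a neighbourhood of $r$ and $\liminf_{z\to r}\|M(z;r)F(z)\|_V > 0$. *)

theory Defs
  imports "HOL-Analysis.Analysis"
begin

definition is_blinfun_inverse ::
  "('b::real_normed_vector \<Rightarrow>\<^sub>L 'a::real_normed_vector) \<Rightarrow> ('a \<Rightarrow>\<^sub>L 'b) \<Rightarrow> bool" where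
  "is_blinfun_inverse S T \<longleftrightarrow> S o\<^sub>L T = id_blinfun \<and> T o\<^sub>L S = id_blinfun"

definition blinfun_invertible :: "('a::real_normed_vector \<Rightarrow>\<^sub>L 'b::real_normed_vector) \<Rightarrow> bool" where
  "blinfun_invertible T \<longleftrightarrow> (\<exists>S. is_blinfun_inverse S T)"

definition loc_lipschitz_at ::
  "'a::metric_space set \<Rightarrow> ('a \<Rightarrow> 'b::metric_space) \<Rightarrow> 'a \<Rightarrow> bool" where
  "loc_lipschitz_at D F z \<longleftrightarrow>
     (\<exists>U L. open U \<and> z \<in> U \<and> (\<forall>x\<in>U \<inter> D. \<forall>y\<in>U \<inter> D. dist (F x) (F y) \<le> L * dist x y))"

text \<open>H is a Newton derivative of F on N:
  F(w+h) - F(w) - H(w+h)h = o(\<parallel>h\<parallel>) as h \<rightarrow> 0, for all w \<in> N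
  (only h with w + h \<in> D are considered, F being defined on D).\<close>
definition newton_derivative_on ::
  "'a::real_normed_vector set \<Rightarrow> ('a \<Rightarrow> 'b::real_normed_vector) \<Rightarrow> ('a \<Rightarrow> ('a \<Rightarrow>\<^sub>L 'b)) \<Rightarrow> 'a set \<Rightarrow> bool" where
  "newton_derivative_on D F H N \<longleftrightarrow>
     (\<forall>w\<in>N. \<forall>e>0. \<exists>\<delta>>0. \<forall>h. w + h \<in> D \<and> norm h < \<delta> \<longrightarrow>
        norm (F (w + h) - F w - H (w + h) h) \<le> e * norm h)"

definition semismooth_at_with ::
  "'a::real_normed_vector set \<Rightarrow> ('a \<Rightarrow> 'b::real_normed_vector) \<Rightarrow> 'a \<Rightarrow> ('a \<Rightarrow> ('a \<Rightarrow>\<^sub>L 'b)) \<Rightarrow> 'a set \<Rightarrow> bool" where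
  "semismooth_at_with D F z H N \<longleftrightarrow>
     loc_lipschitz_at D F z \<and> open N \<and> z \<in> N \<and> N \<subseteq> D \<and> newton_derivative_on D F H N"

definition deflation_operator ::
  "('a::real_normed_vector \<Rightarrow> 'b::real_normed_vector) \<Rightarrow> 'a \<Rightarrow> ('a \<Rightarrow> ('b \<Rightarrow>\<^sub>L 'b)) \<Rightarrow> bool" where
  "deflation_operator F r M \<longleftrightarrow>
     (\<exists>U. open U \<and> r \<in> U \<and> (\<forall>z\<in>U - {r}. blinfun_invertible (M z))) \<and>
     Liminf (at r) (\<lambda>z. ereal (norm (M z (F z)))) > 0"

end

theory Submission
  imports Defs
begin

lemma key_bound:
  fixes F :: "'z::banach \<Rightarrow> 'v::banach"
    and H :: "'z \<Rightarrow> ('z \<Rightarrow>\<^sub>L 'v)"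
    and D N :: "'z set" and r :: 'z and \<Gamma> p :: real
  assumes "F r = 0"
    and "semismooth_at_with D F r H N"
    and "\<forall>z\<in>N. \<exists>S. is_blinfun_inverse S (H z) \<and> norm S \<le> \<Gamma>"
    and "p \<ge> 1"
  shows "eventually (\<lambda>z. 1 / (2 * max \<Gamma> 1) \<le> norm (F z) / norm (z - r) powr p) (at r)"
proof -
  define G where "G = max \<Gamma> 1"
  have G: "G \<ge> 1" "\<Gamma> \<le> G" unfolding G_def by auto
  from assms(2) have N: "open N" "r \<in> N" "N \<subseteq> D" and nd: "newton_derivative_on D F H N"
    unfolding semismooth_at_with_def by auto
  obtain e where e: "e > 0" "ball r e \<subseteq> N" using N open_contains_ball by blast
  have "1 / (2*G) > 0" using G by simp
  then obtain \<delta> where d: "\<delta> > 0" and dh: "\<And>h. r + h \<in> D \<and> norm h < \<delta> \<Longrightarrow>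
        norm (F (r + h) - F r - H (r + h) h) \<le> (1/(2*G)) * norm h"
    using nd N(2) unfolding newton_derivative_on_def by blast
  have "\<forall>z. z \<noteq> r \<and> dist z r < min (min e \<delta>) 1 \<longrightarrow> 1 / (2 * G) \<le> norm (F z) / norm (z - r) powr p"
  proof (intro allI impI)
    fix z assume z: "z \<noteq> r \<and> dist z r < min (min e \<delta>) 1"
    define h where "h = z - r"
    have hz: "r + h = z" unfolding h_def by simp
    have nh: "norm h < e" "norm h < \<delta>" "norm h < 1" "norm h > 0"
      using z unfolding h_def by (auto simp: dist_norm)
    have zN: "z \<in> N" using e nh(1) hz by (auto simp: dist_norm h_def norm_minus_commute)
    then have zD: "z \<in> D" using N by auto
    have b1: "norm (F z - H z h) \<le> (1/(2*G)) * norm h"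
      using dh[of h] hz zD nh assms(1) by auto
    obtain S where S: "is_blinfun_inverse S (H z)" "norm S \<le> \<Gamma>" using assms(3) zN by blast
    have "h = S (H z h)" using S(1) unfolding is_blinfun_inverse_def
      by (metis blinfun_apply_blinfun_compose blinfun_apply_id_blinfun)
    then have "norm h \<le> norm S * norm (H z h)" by (metis norm_blinfun)
    also have "\<dots> \<le> G * norm (H z h)" using S(2) G by (intro mult_right_mono) auto
    also have "norm (H z h) \<le> norm (F z) + norm (F z - H z h)"
      by (metis add.commute diff_add_cancel norm_minus_commute norm_triangle_ineq4 add_diff_cancel_left')
    also have "norm (F z) + norm (F z - H z h) \<le> norm (F z) + (1/(2*G)) * norm h"
      using b1 by linarith
    finally have "norm h \<le> G * (norm (F z) + (1/(2*G)) * norm h)"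
      using G by (simp add: mult_left_mono)
    also have "G * (norm (F z) + (1/(2*G)) * norm h) = G * norm (F z) + norm h / 2"
      using G by (simp add: distrib_left)
    finally have "norm h \<le> G * norm (F z) + norm h / 2" .
    then have c: "norm h \<le> 2 * G * norm (F z)" by simp
    have pw: "norm h powr p \<le> norm h powr 1"
      using powr_mono'[of 1 p "norm h"] nh assms(4) by auto
    have pp: "norm h powr p > 0" using nh by simp
    have "1 / (2*G) \<le> norm (F z) / norm h" using c nh G by (simp add: divide_simps mult.commute)
    also have "\<dots> \<le> norm (F z) / norm h powr p" using pw pp nh
      by (intro divide_left_mono) auto
    finally show "1 / (2 * G) \<le> norm (F z) / norm (z - r) powr p" unfolding h_def .
  qed
  then show ?thesis unfolding eventually_at G_def[symmetric] using d e(1)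
    by (metis min_less_iff_conj zero_less_one)
qed

lemma inv_scale:
  fixes c :: real assumes "c \<noteq> 0"
  shows "blinfun_invertible (c *\<^sub>R (id_blinfun :: 'v::real_normed_vector \<Rightarrow>\<^sub>L 'v))"
  unfolding blinfun_invertible_def is_blinfun_inverse_def
  by (rule exI[of _ "(1/c) *\<^sub>R id_blinfun"]) (auto intro!: blinfun_eqI simp: assms scaleR_blinfun.rep_eq)

theorem mainTheorem1:
  fixes F :: "'z::banach \<Rightarrow> 'v::banach"
    and H :: "'z \<Rightarrow> ('z \<Rightarrow>\<^sub>L 'v)"
    and D N :: "'z set" and r :: 'z and \<Gamma> p :: real
  assumes "open D" and "r \<in> D" and "F r = 0"
    and "semismooth_at_with D F r H N"
    and "\<forall>z\<in>N. \<exists>S. is_blinfun_inverse S (H z) \<and> norm S \<le> \<Gamma>"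
    and "p \<ge> 1"
  shows "deflation_operator F r (\<lambda>z. (1 / norm (z - r) powr p) *\<^sub>R id_blinfun)
    \<and> deflation_operator F r (\<lambda>z. (1 / norm (z - r) powr p + 1) *\<^sub>R id_blinfun)"
proof -
  define c where "c = 1 / (2 * max \<Gamma> 1)"
  have c0: "c > 0" unfolding c_def by simp
  have ev: "eventually (\<lambda>z. c \<le> norm (F z) / norm (z - r) powr p) (at r)"
    using key_bound[OF assms(3-6)] unfolding c_def .
  have U: "\<exists>U. open U \<and> r \<in> U \<and> (\<forall>z\<in>U - {r}. blinfun_invertible (a z *\<^sub>R (id_blinfun :: 'v \<Rightarrow>\<^sub>L 'v)))"
    if "\<And>z. z \<noteq> r \<Longrightarrow> a z \<noteq> 0" for a
    using that by (intro exI[of _ UNIV]) (auto intro!: inv_scale)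
  have pos: "norm (z - r) powr p > 0" if "z \<noteq> r" for z using that by simp
  show ?thesis
    unfolding deflation_operator_def
  proof (intro conjI)
    show "\<exists>U. open U \<and> r \<in> U \<and> (\<forall>z\<in>U - {r}. blinfun_invertible ((1 / norm (z - r) powr p) *\<^sub>R (id_blinfun :: 'v \<Rightarrow>\<^sub>L 'v)))"
      by (rule U) (use pos in auto)
    show "\<exists>U. open U \<and> r \<in> U \<and> (\<forall>z\<in>U - {r}. blinfun_invertible ((1 / norm (z - r) powr p + 1) *\<^sub>R (id_blinfun :: 'v \<Rightarrow>\<^sub>L 'v)))"
      by (rule U) (use pos in \<open>simp add: add_pos_pos[THEN less_imp_neq, symmetric]\<close>)
    have L: "ereal c \<le> Liminf (at r) (\<lambda>z. ereal (norm (((1 / norm (z - r) powr p) *\<^sub>R id_blinfun) (F z))))"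
      apply (rule Liminf_bounded)
      using ev
    proof eventually_elim
      case (elim z)
      then show ?case by (simp add: scaleR_blinfun.rep_eq divide_inverse mult.commute)
    qed
    then show "0 < Liminf (at r) (\<lambda>z. ereal (norm (((1 / norm (z - r) powr p) *\<^sub>R (id_blinfun :: 'v \<Rightarrow>\<^sub>L 'v)) (F z))))"
      using order.strict_trans2[OF _ L] c0 by simp
    have L: "ereal c \<le> Liminf (at r) (\<lambda>z. ereal (norm (((1 / norm (z - r) powr p + 1) *\<^sub>R id_blinfun) (F z))))"
      apply (rule Liminf_bounded)
      using ev
    proof eventually_elim
      case (elim z)
      have "c \<le> norm (F z) / norm (z - r) powr p" by fact
      also have "\<dots> \<le> \<bar>1 / norm (z - r) powr p + 1\<bar> * norm (F z)"
      proof -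
        have x: "0 \<le> 1 / norm (z - r) powr p" by simp
        have "norm (F z) / norm (z - r) powr p = (1 / norm (z - r) powr p) * norm (F z)" by simp
        also have "\<dots> \<le> (1 / norm (z - r) powr p + 1) * norm (F z)"
          by (intro mult_right_mono) auto
        also have "\<dots> = \<bar>1 / norm (z - r) powr p + 1\<bar> * norm (F z)"
          using x by (simp only: abs_of_nonneg[of "1 / norm (z - r) powr p + 1"])
        finally show ?thesis .
      qed
      finally show ?case by (simp add: scaleR_blinfun.rep_eq)
    qed
    then show "0 < Liminf (at r) (\<lambda>z. ereal (norm (((1 / norm (z - r) powr p + 1) *\<^sub>R (id_blinfun :: 'v \<Rightarrow>\<^sub>L 'v)) (F z))))"
      using order.strict_trans2[OF _ L] c0 by simp
  qed
qed

end
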